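(* The set $\Gamma_{\mathcal{T}}$ of all finite branches that are not refutable in the tableau calculus $\mathcal{T}$ is an abstract consistency class.
   Context: Types: a countable set of base types including a distinguished $o$; other base types are sorts ($\alpha$). Types: base types and $\sigma\tau$ (functions from $\sigma$ to $\tau$; $\sigma\tau\mu=\sigma(\tau\mu)$). Countably many names, each with a unique type, infinitely many of each type. Terms: names; $st:\mu$ for $s:\tau\mu,t:\tau$; $\lambda x.t:\sigma\tau$ for a name $x:\sigma$, $t:\tau$. Logical constants: $\neg:oo$, $=_\sigma:\sigma\sigma o$; other names are variables. Formulas: terms of type $o$; $s=_\sigma t$ is $(=_\sigma s)t$; $s\neq_\sigma t$ is $\neg(s=_\sigma t)$. A fixed type-preserving total normalization operator $[\cdot]$ on terms is given; $s$ is normal iff $[s]=s$; $[[s]]=[s]$, $[[s]t]=[st]$, and $[xs_1\dots s_n]=x[s_1]\dots[s_n]$ for every name $x$, $n\ge0$, with $xs_1\dots s_n$ of base type. A branch is a set of normal formulas. Tableau calculus $\mathcal{T}$: a rule instance $A/A_1\dots A_n$ has $A$ a finite branch containing the premises, $A_i=A\cup$(formulas of the $i$-th alternative). Rules ($x$ a variable): (DN) $\neg\neg s$ / $s$. (BQ) $s=_ot$ / $\{s,t\}\mid\{\neg s,\neg t\}$. (BE) $s\neq_o t$ / $\{s,\neg t\}\mid\{\neg s,t\}$. (FQ) $s=_{\sigma\tau}t$ / $[su]=[tu]$, $u:\sigma$ normal. (FE) $s\neq_{\sigma\tau}t$ / $[sx]\neq[tx]$, $x:\sigma$ not free in $A$.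 (Mat) $xs_1\dots s_n,\neg xt_1\dots t_n$ / $s_1\neq t_1\mid\dots\mid s_n\neq t_n$ ($n\ge0$). (Dec) $xs_1\dots s_n\neq_\alpha xt_1\dots t_n$ / $s_1\neq t_1\mid\dots\mid s_n\neq t_n$ ($n\ge0$). (Con) $s=_\alpha t,u\neq_\alpha v$ / $\{s\neq u,t\neq u\}\mid\{s\neq v,t\neq v\}$. $A$ is closed if $x,\neg x\in A$ for a variable $x:o$ or $x\neq_\alpha x\in A$ for a variable $x:\alpha$. Restrictions: (1) instances with $A$ closed are admitted only for Mat or Dec with $n=0$; (2) FE on $s\neq t\in A$ only if no variable $x$ has $[sx]\neq[tx]\in A$. Refutable: least set of branches such that if $A/A_1\dots A_n$ is an admitted instance and all $A_i$ are refutable then $A$ is refutable. An abstract consistency class is a set $\Gamma$ of branches such that every $A\in\Gamma$ satisfies: (DN) if $\neg\neg s\in A$ then $A\cup\{s\}\in\Gamma$; (BQ) if $s=_ot\in A$ then $A\cup\{s,t\}\in\Gamma$ or $A\cup\{\neg s,\neg t\}\in\Gamma$; (BE) if $s\neq_ot\in A$ then $A\cup\{s,\neg t\}\in\Gamma$ or $A\cup\{\neg s,t\}\in\Gamma$; (FQ) if $s=_{\sigma\tau}t\in A$ then $A\cup\{[su]=[tu]\}\in\Gamma$ for every normal $u:\sigma$; (FE) if $s\neq_{\sigma\tau}t\in A$ then $A\cup\{[sx]\neq[tx]\}\in\Gamma$ for some variable $x$; (Mat) if $xs_1\dots s_n,\neg xt_1\dots t_n\in A$ then $n\ge1$ and $A\cup\{s_i\neq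 t_i\}\in\Gamma$ for some $i$; (Dec) if $xs_1\dots s_n\neq_\alpha xt_1\dots t_n\in A$ then $n\ge1$ and $A\cup\{s_i\neq t_i\}\in\Gamma$ for some $i$; (Con) if $s=_\alpha t,u\neq_\alpha v\in A$ then $A\cup\{s\neq u,t\neq u\}\in\Gamma$ or $A\cup\{s\neq v,t\neq v\}\in\Gamma$. *)

theory Defs
  imports Main
begin

datatype ty = Base nat | Fun ty ty

abbreviation oT :: ty where "oT \<equiv> Base 0"

definition is_sort :: "ty \<Rightarrow> bool" where
  "is_sort a \<longleftrightarrow> (\<exists>n. a = Base n \<and> n \<noteq> 0)"

datatype name = NVar nat ty | NNeg | NEq ty

fun nty :: "name \<Rightarrow> ty" where
  "nty (NVar n a) = a"
| "nty NNeg = Fun oT oT"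
| "nty (NEq a) = Fun a (Fun a oT)"

definition is_var :: "name \<Rightarrow> bool" where
  "is_var x \<longleftrightarrow> (\<exists>n a. x = NVar n a)"

datatype tm = Nm name | App tm tm | Lam name tm

fun tyof :: "tm \<Rightarrow> ty option" where
  "tyof (Nm x) = Some (nty x)"
| "tyof (App s t) = (case tyof s of
      Some (Fun a b) \<Rightarrow> (if tyof t = Some a then Some b else None)
    | _ \<Rightarrow> None)"
| "tyof (Lam x t) = map_option (Fun (nty x)) (tyof t)"

fun free :: "tm \<Rightarrow> name set" where
  "free (Nm x) = {x}"
| "free (App s t) = free s \<union> free t"
| "free (Lam x t) = free t - {x}"

definition apps :: "tm \<Rightarrow> tm list \<Rightarrow> tm" where
  "apps h ss = foldl App h ss"

definition Negf :: "tm \<Rightarrow> tm" where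
  "Negf s = App (Nm NNeg) s"

definition Eqf :: "ty \<Rightarrow> tm \<Rightarrow> tm \<Rightarrow> tm" where
  "Eqf a s t = App (App (Nm (NEq a)) s) t"

definition Neqf :: "ty \<Rightarrow> tm \<Rightarrow> tm \<Rightarrow> tm" where
  "Neqf a s t = Negf (Eqf a s t)"

text \<open>Properties required of the fixed normalization operator [.] (stated on terms,
  i.e. well-typed raw terms).\<close>
definition norm_op :: "(tm \<Rightarrow> tm) \<Rightarrow> bool" where
  "norm_op nf \<longleftrightarrow>
     (\<forall>s a. tyof s = Some a \<longrightarrow> tyof (nf s) = Some a)
   \<and> (\<forall>s. tyof s \<noteq> None \<longrightarrow> nf (nf s) = nf s)
   \<and> (\<forall>s t. tyof (App s t) \<noteq> None \<longrightarrow> nf (App (nf s) t) = nf (App s t))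
   \<and> (\<forall>x ss b. tyof (apps (Nm x) ss) = Some (Base b) \<longrightarrow>
          nf (apps (Nm x) ss) = apps (Nm x) (map nf ss))"

definition branch :: "(tm \<Rightarrow> tm) \<Rightarrow> tm set \<Rightarrow> bool" where
  "branch nf A \<longleftrightarrow> (\<forall>s\<in>A. tyof s = Some oT \<and> nf s = s)"

definition closed :: "tm set \<Rightarrow> bool" where
  "closed A \<longleftrightarrow>
     (\<exists>n. Nm (NVar n oT) \<in> A \<and> Negf (Nm (NVar n oT)) \<in> A)
   \<or> (\<exists>n a. is_sort a \<and> Neqf a (Nm (NVar n a)) (Nm (NVar n a)) \<in> A)"

section \<open>Tableau rules (instances A / A_1 ... A_n, alternatives as a list)\<close>

definition r_DN :: "tm set \<Rightarrow> tm set list \<Rightarrow> bool" where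
  "r_DN A As \<longleftrightarrow> (\<exists>s. Negf (Negf s) \<in> A \<and> As = [A \<union> {s}])"

definition r_BQ :: "tm set \<Rightarrow> tm set list \<Rightarrow> bool" where
  "r_BQ A As \<longleftrightarrow> (\<exists>s t. Eqf oT s t \<in> A \<and>
      As = [A \<union> {s, t}, A \<union> {Negf s, Negf t}])"

definition r_BE :: "tm set \<Rightarrow> tm set list \<Rightarrow> bool" where
  "r_BE A As \<longleftrightarrow> (\<exists>s t. Neqf oT s t \<in> A \<and>
      As = [A \<union> {s, Negf t}, A \<union> {Negf s, t}])"

definition r_FQ :: "(tm \<Rightarrow> tm) \<Rightarrow> tm set \<Rightarrow> tm set list \<Rightarrow> bool" where
  "r_FQ nf A As \<longleftrightarrow> (\<exists>a b s t u. Eqf (Fun a b) s t \<in> A \<and> tyof u = Some a \<and> nf u = u \<and>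
      As = [A \<union> {Eqf b (nf (App s u)) (nf (App t u))}])"

text \<open>FE together with restriction (2).\<close>
definition r_FE :: "(tm \<Rightarrow> tm) \<Rightarrow> tm set \<Rightarrow> tm set list \<Rightarrow> bool" where
  "r_FE nf A As \<longleftrightarrow> (\<exists>a b s t n. Neqf (Fun a b) s t \<in> A \<and>
      NVar n a \<notin> \<Union> (free ` A) \<and>
      \<not> (\<exists>m. Neqf b (nf (App s (Nm (NVar m a)))) (nf (App t (Nm (NVar m a)))) \<in> A) \<and>
      As = [A \<union> {Neqf b (nf (App s (Nm (NVar n a)))) (nf (App t (Nm (NVar n a))))}])"

definition neq_alts :: "tm set \<Rightarrow> tm list \<Rightarrow> tm list \<Rightarrow> tm set list" where
  "neq_alts A ss ts =
     map (\<lambda>i. A \<union> {Neqf (the (tyof (ss ! i))) (ss ! i) (ts ! i)}) [0..<length ss]"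

definition r_Mat :: "nat \<Rightarrow> tm set \<Rightarrow> tm set list \<Rightarrow> bool" where
  "r_Mat n A As \<longleftrightarrow> (\<exists>x ss ts. is_var x \<and> length ss = n \<and> length ts = n \<and>
      apps (Nm x) ss \<in> A \<and> Negf (apps (Nm x) ts) \<in> A \<and> As = neq_alts A ss ts)"

definition r_Dec :: "nat \<Rightarrow> tm set \<Rightarrow> tm set list \<Rightarrow> bool" where
  "r_Dec n A As \<longleftrightarrow> (\<exists>x ss ts a. is_var x \<and> is_sort a \<and> length ss = n \<and> length ts = n \<and>
      Neqf a (apps (Nm x) ss) (apps (Nm x) ts) \<in> A \<and> As = neq_alts A ss ts)"

definition r_Con :: "tm set \<Rightarrow> tm set list \<Rightarrow> bool" where
  "r_Con A As \<longleftrightarrow> (\<exists>a s t u v. is_sort a \<and> Eqf a s t \<in> A \<and> Neqf a u v \<in> A \<and>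
      As = [A \<union> {Neqf a s u, Neqf a t u}, A \<union> {Neqf a s v, Neqf a t v}])"

text \<open>Admitted rule instances: A a finite branch; restriction (1): for closed A only
  Mat or Dec with n = 0; restriction (2) is built into r_FE.\<close>
definition admitted :: "(tm \<Rightarrow> tm) \<Rightarrow> tm set \<Rightarrow> tm set list \<Rightarrow> bool" where
  "admitted nf A As \<longleftrightarrow> finite A \<and> branch nf A \<and>
     ((\<not> closed A \<and> (r_DN A As \<or> r_BQ A As \<or> r_BE A As \<or> r_FQ nf A As \<or> r_FE nf A As
        \<or> (\<exists>n. r_Mat n A As) \<or> (\<exists>n. r_Dec n A As) \<or> r_Con A As))
      \<or> r_Mat 0 A As \<or> r_Dec 0 A As)"

inductive refutable :: "(tm \<Rightarrow> tm) \<Rightarrow> tm set \<Rightarrow> bool" for nf where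
  "admitted nf A As \<Longrightarrow> (\<forall>B\<in>set As. refutable nf B) \<Longrightarrow> refutable nf A"

definition acc :: "(tm \<Rightarrow> tm) \<Rightarrow> tm set set \<Rightarrow> bool" where
  "acc nf G \<longleftrightarrow> (\<forall>A\<in>G. branch nf A
   \<and> (\<forall>s. Negf (Negf s) \<in> A \<longrightarrow> A \<union> {s} \<in> G)
   \<and> (\<forall>s t. Eqf oT s t \<in> A \<longrightarrow> A \<union> {s, t} \<in> G \<or> A \<union> {Negf s, Negf t} \<in> G)
   \<and> (\<forall>s t. Neqf oT s t \<in> A \<longrightarrow> A \<union> {s, Negf t} \<in> G \<or> A \<union> {Negf s, t} \<in> G)
   \<and> (\<forall>a b s t. Eqf (Fun a b) s t \<in> A \<longrightarrow>
        (\<forall>u. tyof u = Some a \<and> nf u = u \<longrightarrow> A \<union> {Eqf b (nf (App s u)) (nf (App t u))} \<in> G))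
   \<and> (\<forall>a b s t. Neqf (Fun a b) s t \<in> A \<longrightarrow>
        (\<exists>n. A \<union> {Neqf b (nf (App s (Nm (NVar n a)))) (nf (App t (Nm (NVar n a))))} \<in> G))
   \<and> (\<forall>x ss ts. is_var x \<and> length ss = length ts \<and>
        apps (Nm x) ss \<in> A \<and> Negf (apps (Nm x) ts) \<in> A \<longrightarrow>
        length ss \<ge> 1 \<and> (\<exists>i<length ss. A \<union> {Neqf (the (tyof (ss ! i))) (ss ! i) (ts ! i)} \<in> G))
   \<and> (\<forall>x ss ts a. is_var x \<and> is_sort a \<and> length ss = length ts \<and>
        Neqf a (apps (Nm x) ss) (apps (Nm x) ts) \<in> A \<longrightarrow>
        length ss \<ge> 1 \<and> (\<exists>i<length ss. A \<union> {Neqf (the (tyof (ss ! i))) (ss ! i) (ts ! i)} \<in> G))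
   \<and> (\<forall>a s t u v. is_sort a \<and> Eqf a s t \<in> A \<and> Neqf a u v \<in> A \<longrightarrow>
        A \<union> {Neqf a s u, Neqf a t u} \<in> G \<or> A \<union> {Neqf a s v, Neqf a t v} \<in> G))"

end

theory Submission
  imports Defs
begin

lemma tyof_App_Some: "tyof (App h s) = Some X \<longleftrightarrow> (\<exists>a. tyof h = Some (Fun a X) \<and> tyof s = Some a)"
  by (auto split: option.splits ty.splits if_splits)

lemma tyof_Negf: "tyof (Negf s) = Some X \<longleftrightarrow> X = oT \<and> tyof s = Some oT"
  by (auto simp: Negf_def tyof_App_Some)

lemma tyof_Eqf: "tyof (Eqf a s t) = Some X \<longleftrightarrow> X = oT \<and> tyof s = Some a \<and> tyof t = Some a"
  by (auto simp: Eqf_def tyof_App_Some)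

lemma nf_apps: "norm_op nf \<Longrightarrow> tyof (apps (Nm x) ss) = Some (Base b) \<Longrightarrow>
   nf (apps (Nm x) ss) = apps (Nm x) (map nf ss)"
  unfolding norm_op_def by blast

lemma nf_Negf: assumes "norm_op nf" "tyof s = Some oT" shows "nf (Negf s) = Negf (nf s)"
proof -
  have e: "Negf s = apps (Nm NNeg) [s]" by (simp add: Negf_def apps_def)
  have "tyof (apps (Nm NNeg) [s]) = Some oT" using assms(2) e tyof_Negf by metis
  from nf_apps[OF assms(1) this] e show ?thesis by (simp add: Negf_def apps_def)
qed

lemma nf_Eqf: assumes "norm_op nf" "tyof s = Some a" "tyof t = Some a"
  shows "nf (Eqf a s t) = Eqf a (nf s) (nf t)"
proof -
  have e: "Eqf a s t = apps (Nm (NEq a)) [s, t]" by (simp add: Eqf_def apps_def)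
  have "tyof (apps (Nm (NEq a)) [s, t]) = Some oT" using assms(2,3) e tyof_Eqf by metis
  from nf_apps[OF assms(1) this] e show ?thesis by (simp add: Eqf_def apps_def)
qed

definition good :: "(tm \<Rightarrow> tm) \<Rightarrow> tm \<Rightarrow> bool" where
  "good nf s \<longleftrightarrow> tyof s = Some oT \<and> nf s = s"

lemma good_Negf: "norm_op nf \<Longrightarrow> good nf (Negf s) \<longleftrightarrow> good nf s"
  unfolding good_def using nf_Negf tyof_Negf by (metis Negf_def tm.inject(2))

lemma good_Eqf: "norm_op nf \<Longrightarrow> good nf (Eqf a s t) \<longleftrightarrow>
   (tyof s = Some a \<and> tyof t = Some a \<and> nf s = s \<and> nf t = t)"
  unfolding good_def using nf_Eqf tyof_Eqf by (metis Eqf_def tm.inject(2))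

lemma good_Neqf: "norm_op nf \<Longrightarrow> good nf (Neqf a s t) \<longleftrightarrow>
   (tyof s = Some a \<and> tyof t = Some a \<and> nf s = s \<and> nf t = t)"
  unfolding Neqf_def using good_Negf good_Eqf by blast

lemma branch_good: "branch nf A \<longleftrightarrow> (\<forall>s\<in>A. good nf s)"
  by (auto simp: branch_def good_def)

lemma free_finite: "finite (free t)"
  by (induction t) auto

fun funs :: "ty list \<Rightarrow> ty \<Rightarrow> ty" where
  "funs [] c = c"
| "funs (a # as) c = Fun a (funs as c)"

lemma tyof_apps: "tyof (apps h ss) = Some c \<longleftrightarrow>
   (\<exists>as. list_all2 (\<lambda>s a. tyof s = Some a) ss as \<and> tyof h = Some (funs as c))"
proof (induction ss arbitrary: h)
  case Nil
  then show ?case by (simp add: apps_def)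
next
  case (Cons s ss)
  have "apps h (s # ss) = apps (App h s) ss" by (simp add: apps_def)
  then show ?case using Cons by (auto simp: list_all2_Cons1 tyof_App_Some simp del: tyof.simps(2)) (metis funs.simps(2))
qed

lemma funs_inj: "length as = length bs \<Longrightarrow> funs as c = funs bs d \<Longrightarrow> as = bs \<and> c = d"
  by (induction as bs rule: list_induct2) auto

lemma apps_inj: "length ss = length ts \<Longrightarrow> apps h ss = apps g ts \<Longrightarrow> h = g \<and> ss = ts"
proof (induction ss ts arbitrary: h g rule: list_induct2)
  case Nil
  then show ?case by (simp add: apps_def)
next
  case (Cons x xs y ys)
  have "apps (App h x) xs = apps (App g y) ys" using Cons.prems by (simp add: apps_def)
  then show ?case using Cons.IH by auto
qed

lemma closed_refutable:
  assumes "closed A" "finite A" "branch nf A" shows "refutable nf A"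
proof -
  have "admitted nf A []"
    using assms unfolding admitted_def closed_def r_Mat_def r_Dec_def
    by (auto simp: apps_def neq_alts_def is_var_def)
  then show ?thesis by (rule refutable.intros) simp
qed

lemma args_facts:
  assumes nf: "norm_op nf" and l: "length ss = length ts"
    and h1: "tyof (apps (Nm x) ss) = Some (Base b)" "nf (apps (Nm x) ss) = apps (Nm x) ss"
    and h2: "tyof (apps (Nm x) ts) = Some (Base b)" "nf (apps (Nm x) ts) = apps (Nm x) ts"
    and i: "i < length ss"
  shows "good nf (Neqf (the (tyof (ss ! i))) (ss ! i) (ts ! i))"
proof -
  obtain as1 where a1: "list_all2 (\<lambda>s a. tyof s = Some a) ss as1" "tyof (Nm x) = Some (funs as1 (Base b))"
    using tyof_apps[THEN iffD1, OF h1(1)] by blast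
  obtain as2 where a2: "list_all2 (\<lambda>s a. tyof s = Some a) ts as2" "tyof (Nm x) = Some (funs as2 (Base b))"
    using tyof_apps[THEN iffD1, OF h2(1)] by blast
  have "length as1 = length as2" using list_all2_lengthD[OF a1(1)] list_all2_lengthD[OF a2(1)] l by simp
  then have "as1 = as2" using funs_inj[of as1 as2 "Base b" "Base b"] a1(2) a2(2) by simp
  then have t: "tyof (ss ! i) = Some (as1 ! i)" "tyof (ts ! i) = Some (as1 ! i)"
    using list_all2_nthD[OF a1(1) i] list_all2_nthD[OF a2(1)] i l by simp_all
  have "apps (Nm x) (map nf ss) = apps (Nm x) ss" using nf_apps[OF nf h1(1)] h1(2) by simp
  then have "map nf ss = ss" using apps_inj[of "map nf ss" ss] by simp
  then have n1: "nf (ss ! i) = ss ! i" using nth_map[OF i, of nf] by simp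
  have "apps (Nm x) (map nf ts) = apps (Nm x) ts" using nf_apps[OF nf h2(1)] h2(2) by simp
  then have "map nf ts = ts" using apps_inj[of "map nf ts" ts] by simp
  moreover have "i < length ts" using i l by simp
  ultimately have n2: "nf (ts ! i) = ts ! i" using nth_map[of i ts nf] by simp
  show ?thesis using good_Neqf[OF nf] t n1 n2 by simp
qed

lemma alt: "admitted nf A As \<Longrightarrow> \<not> refutable nf A \<Longrightarrow> \<exists>B\<in>set As. \<not> refutable nf B"
  using refutable.intros by blast

lemma lemma9p1_core:
  assumes nf: "norm_op nf" and A: "finite A" "branch nf A" "\<not> refutable nf A"
  defines "G \<equiv> {A. finite A \<and> branch nf A \<and> \<not> refutable nf A}"
  shows
   "(\<forall>s. Negf (Negf s) \<in> A \<longrightarrow> A \<union> {s} \<in> G)"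
   "(\<forall>s t. Eqf oT s t \<in> A \<longrightarrow> A \<union> {s, t} \<in> G \<or> A \<union> {Negf s, Negf t} \<in> G)"
   "(\<forall>s t. Neqf oT s t \<in> A \<longrightarrow> A \<union> {s, Negf t} \<in> G \<or> A \<union> {Negf s, t} \<in> G)"
   "(\<forall>a b s t. Eqf (Fun a b) s t \<in> A \<longrightarrow>
        (\<forall>u. tyof u = Some a \<and> nf u = u \<longrightarrow> A \<union> {Eqf b (nf (App s u)) (nf (App t u))} \<in> G))"
   "(\<forall>a b s t. Neqf (Fun a b) s t \<in> A \<longrightarrow>
        (\<exists>n. A \<union> {Neqf b (nf (App s (Nm (NVar n a)))) (nf (App t (Nm (NVar n a))))} \<in> G))"
   "(\<forall>x ss ts. is_var x \<and> length ss = length ts \<and>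
        apps (Nm x) ss \<in> A \<and> Negf (apps (Nm x) ts) \<in> A \<longrightarrow>
        length ss \<ge> 1 \<and> (\<exists>i<length ss. A \<union> {Neqf (the (tyof (ss ! i))) (ss ! i) (ts ! i)} \<in> G))"
   "(\<forall>x ss ts a. is_var x \<and> is_sort a \<and> length ss = length ts \<and>
        Neqf a (apps (Nm x) ss) (apps (Nm x) ts) \<in> A \<longrightarrow>
        length ss \<ge> 1 \<and> (\<exists>i<length ss. A \<union> {Neqf (the (tyof (ss ! i))) (ss ! i) (ts ! i)} \<in> G))"
   "(\<forall>a s t u v. is_sort a \<and> Eqf a s t \<in> A \<and> Neqf a u v \<in> A \<longrightarrow>
        A \<union> {Neqf a s u, Neqf a t u} \<in> G \<or> A \<union> {Neqf a s v, Neqf a t v} \<in> G)"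
proof -
  have nc: "\<not> closed A" using closed_refutable A by blast
  have gA: "\<And>s. s \<in> A \<Longrightarrow> good nf s" using A(2) branch_good by blast
  have inG: "\<And>F. finite F \<Longrightarrow> (\<forall>s\<in>F. good nf s) \<Longrightarrow> \<not> refutable nf (A \<union> F) \<Longrightarrow> A \<union> F \<in> G"
    unfolding G_def using A branch_good gA by auto
  have admDN: "r_DN A As \<Longrightarrow> admitted nf A As" for As 
    unfolding admitted_def using A nc by blast
  have admBQ: "r_BQ A As \<Longrightarrow> admitted nf A As" for As 
    unfolding admitted_def using A nc by blast
  have admBE: "r_BE A As \<Longrightarrow> admitted nf A As" for As 
    unfolding admitted_def using A nc by blast
  have admFQ: "r_FQ nf A As \<Longrightarrow> admitted nf A As" for As 
    unfolding admitted_def using A nc by blast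
  have admFE: "r_FE nf A As \<Longrightarrow> admitted nf A As" for As 
    unfolding admitted_def using A nc by blast
  have admMat: "r_Mat n A As \<Longrightarrow> admitted nf A As" for As n
    unfolding admitted_def using A nc by blast
  have admDec: "r_Dec n A As \<Longrightarrow> admitted nf A As" for As n
    unfolding admitted_def using A nc by blast
  have admCon: "r_Con A As \<Longrightarrow> admitted nf A As" for As 
    unfolding admitted_def using A nc by blast

  show "(\<forall>s. Negf (Negf s) \<in> A \<longrightarrow> A \<union> {s} \<in> G)"
  proof (intro allI impI)
    fix s assume m: "Negf (Negf s) \<in> A"
    have "admitted nf A [A \<union> {s}]" by (rule admDN) (unfold r_DN_def, use m in blast)
    then have "\<not> refutable nf (A \<union> {s})" by (auto dest!: alt[OF _ A(3)])
    moreover have "good nf s" using gA[OF m] good_Negf[OF nf] by blast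
    ultimately show "A \<union> {s} \<in> G" using inG[of "{s}"] by simp
  qed
  show "(\<forall>s t. Eqf oT s t \<in> A \<longrightarrow> A \<union> {s, t} \<in> G \<or> A \<union> {Negf s, Negf t} \<in> G)"
  proof (intro allI impI)
    fix s t assume m: "Eqf oT s t \<in> A"
    have "admitted nf A [A \<union> {s, t}, A \<union> {Negf s, Negf t}]" by (rule admBQ) (unfold r_BQ_def, use m in blast)
    then have r: "\<not> refutable nf (A \<union> {s, t}) \<or> \<not> refutable nf (A \<union> {Negf s, Negf t})"
      by (auto dest!: alt[OF _ A(3)])
    have "good nf s" "good nf t" using gA[OF m] good_Eqf[OF nf] unfolding good_def by auto
    then have "good nf (Negf s)" "good nf (Negf t)" using good_Negf[OF nf] by auto
    then show "A \<union> {s, t} \<in> G \<or> A \<union> {Negf s, Negf t} \<in> G"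
      using r inG[of "{s,t}"] inG[of "{Negf s, Negf t}"] \<open>good nf s\<close> \<open>good nf t\<close> by auto
  qed
  show "(\<forall>s t. Neqf oT s t \<in> A \<longrightarrow> A \<union> {s, Negf t} \<in> G \<or> A \<union> {Negf s, t} \<in> G)"
  proof (intro allI impI)
    fix s t assume m: "Neqf oT s t \<in> A"
    have "admitted nf A [A \<union> {s, Negf t}, A \<union> {Negf s, t}]" by (rule admBE) (unfold r_BE_def, use m in blast)
    then have r: "\<not> refutable nf (A \<union> {s, Negf t}) \<or> \<not> refutable nf (A \<union> {Negf s, t})"
      by (auto dest!: alt[OF _ A(3)])
    have "good nf s" "good nf t" using gA[OF m] good_Neqf[OF nf] unfolding good_def by auto
    then have "good nf (Negf s)" "good nf (Negf t)" using good_Negf[OF nf] by auto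
    then show "A \<union> {s, Negf t} \<in> G \<or> A \<union> {Negf s, t} \<in> G"
      using r inG[of "{s,Negf t}"] inG[of "{Negf s, t}"] \<open>good nf s\<close> \<open>good nf t\<close> by auto
  qed
  show "(\<forall>a b s t. Eqf (Fun a b) s t \<in> A \<longrightarrow>
        (\<forall>u. tyof u = Some a \<and> nf u = u \<longrightarrow> A \<union> {Eqf b (nf (App s u)) (nf (App t u))} \<in> G))"
  proof (intro allI impI)
    fix a b s t u assume m: "Eqf (Fun a b) s t \<in> A" and u: "tyof u = Some a \<and> nf u = u"
    have "admitted nf A [A \<union> {Eqf b (nf (App s u)) (nf (App t u))}]"
      by (rule admFQ) (unfold r_FQ_def, use m u in blast)
    then have r: "\<not> refutable nf (A \<union> {Eqf b (nf (App s u)) (nf (App t u))})" by (auto dest!: alt[OF _ A(3)])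
    have ts: "tyof s = Some (Fun a b)" "tyof t = Some (Fun a b)" using gA[OF m] good_Eqf[OF nf] by auto
    then have "tyof (App s u) = Some b" "tyof (App t u) = Some b" using u tyof_App_Some by auto
    then have "tyof (nf (App s u)) = Some b" "tyof (nf (App t u)) = Some b"
      "nf (nf (App s u)) = nf (App s u)" "nf (nf (App t u)) = nf (App t u)"
      using nf unfolding norm_op_def by auto
    then have "good nf (Eqf b (nf (App s u)) (nf (App t u)))" using good_Eqf[OF nf] by simp
    then show "A \<union> {Eqf b (nf (App s u)) (nf (App t u))} \<in> G" using r inG[of "{Eqf b (nf (App s u)) (nf (App t u))}"] by simp
  qed
  show "(\<forall>a b s t. Neqf (Fun a b) s t \<in> A \<longrightarrow>
        (\<exists>n. A \<union> {Neqf b (nf (App s (Nm (NVar n a)))) (nf (App t (Nm (NVar n a))))} \<in> G))"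
  proof (intro allI impI)
    fix a b s t assume m: "Neqf (Fun a b) s t \<in> A"
    have ts: "tyof s = Some (Fun a b)" "tyof t = Some (Fun a b)" using gA[OF m] good_Neqf[OF nf] by auto
    have gn: "good nf (Neqf b (nf (App s (Nm (NVar n a)))) (nf (App t (Nm (NVar n a)))))" for n
    proof -
      have "tyof (App s (Nm (NVar n a))) = Some b" "tyof (App t (Nm (NVar n a))) = Some b"
        using ts tyof_App_Some by auto
      then have "tyof (nf (App s (Nm (NVar n a)))) = Some b" "tyof (nf (App t (Nm (NVar n a)))) = Some b"
        "nf (nf (App s (Nm (NVar n a)))) = nf (App s (Nm (NVar n a)))"
        "nf (nf (App t (Nm (NVar n a)))) = nf (App t (Nm (NVar n a)))"
        using nf unfolding norm_op_def by auto
      then show ?thesis using good_Neqf[OF nf] by simp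
    qed
    show "\<exists>n. A \<union> {Neqf b (nf (App s (Nm (NVar n a)))) (nf (App t (Nm (NVar n a))))} \<in> G"
    proof (cases "\<exists>m. Neqf b (nf (App s (Nm (NVar m a)))) (nf (App t (Nm (NVar m a)))) \<in> A")
      case True
      then obtain k where "Neqf b (nf (App s (Nm (NVar k a)))) (nf (App t (Nm (NVar k a)))) \<in> A" by blast
      then have "A \<union> {Neqf b (nf (App s (Nm (NVar k a)))) (nf (App t (Nm (NVar k a))))} = A" by blast
      then show ?thesis using A unfolding G_def by (metis (mono_tags, lifting) mem_Collect_eq)
    next
      case False
      have "finite (\<Union> (free ` A))" using A(1) free_finite by blast
      then have "finite {n. NVar n a \<in> \<Union> (free ` A)}"
        by (rule finite_vimageI[where h="\<lambda>n. NVar n a", unfolded vimage_def]) (simp add: inj_on_def)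
      then obtain n where n: "n \<notin> {n. NVar n a \<in> \<Union> (free ` A)}" using ex_new_if_finite[OF infinite_UNIV_nat] by blast
      then have n: "NVar n a \<notin> \<Union> (free ` A)" by simp
      have "admitted nf A [A \<union> {Neqf b (nf (App s (Nm (NVar n a)))) (nf (App t (Nm (NVar n a))))}]"
        by (rule admFE) (unfold r_FE_def, use m n False in blast)
      then have "\<not> refutable nf (A \<union> {Neqf b (nf (App s (Nm (NVar n a)))) (nf (App t (Nm (NVar n a))))})"
        by (auto dest!: alt[OF _ A(3)])
      then show ?thesis using inG[of "{Neqf b (nf (App s (Nm (NVar n a)))) (nf (App t (Nm (NVar n a))))}"] gn by auto
    qed
  qed
  show "(\<forall>x ss ts. is_var x \<and> length ss = length ts \<and>
        apps (Nm x) ss \<in> A \<and> Negf (apps (Nm x) ts) \<in> A \<longrightarrow>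
        length ss \<ge> 1 \<and> (\<exists>i<length ss. A \<union> {Neqf (the (tyof (ss ! i))) (ss ! i) (ts ! i)} \<in> G))"
  proof (intro allI impI)
    fix x ss ts assume h: "is_var x \<and> length ss = length ts \<and>
        apps (Nm x) ss \<in> A \<and> Negf (apps (Nm x) ts) \<in> A"
    have ad: "admitted nf A (neq_alts A ss ts)" by (rule admMat) (unfold r_Mat_def, use h in blast)
    have l: "length ss \<ge> 1"
    proof (rule ccontr)
      assume "\<not> length ss \<ge> 1"
      then have "length ss = 0" by linarith
      then have "ss = []" "ts = []" using h by auto
      then have "neq_alts A ss ts = []" by (simp add: neq_alts_def)
      then show False using alt[OF ad] A by simp
    qed
    obtain B where B: "B \<in> set (neq_alts A ss ts)" "\<not> refutable nf B" using alt[OF ad] A by blast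
    then obtain i where i: "i < length ss" "B = A \<union> {Neqf (the (tyof (ss ! i))) (ss ! i) (ts ! i)}"
      by (auto simp: neq_alts_def)
    have g1: "good nf (apps (Nm x) ss)" using gA h by blast
    have g2: "good nf (apps (Nm x) ts)" using gA h good_Negf[OF nf] by blast
    have "good nf (Neqf (the (tyof (ss ! i))) (ss ! i) (ts ! i))"
      using args_facts[OF nf _ _ _ _ _ i(1), of ts x 0] h g1 g2 unfolding good_def by auto
    then show "length ss \<ge> 1 \<and> (\<exists>i<length ss. A \<union> {Neqf (the (tyof (ss ! i))) (ss ! i) (ts ! i)} \<in> G)"
      using l i B inG[of "{Neqf (the (tyof (ss ! i))) (ss ! i) (ts ! i)}"] by auto
  qed
  show "(\<forall>x ss ts a. is_var x \<and> is_sort a \<and> length ss = length ts \<and>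
        Neqf a (apps (Nm x) ss) (apps (Nm x) ts) \<in> A \<longrightarrow>
        length ss \<ge> 1 \<and> (\<exists>i<length ss. A \<union> {Neqf (the (tyof (ss ! i))) (ss ! i) (ts ! i)} \<in> G))"
  proof (intro allI impI)
    fix x ss ts a assume h: "is_var x \<and> is_sort a \<and> length ss = length ts \<and>
        Neqf a (apps (Nm x) ss) (apps (Nm x) ts) \<in> A"
    have ad: "admitted nf A (neq_alts A ss ts)" by (rule admDec) (unfold r_Dec_def, use h in blast)
    have l: "length ss \<ge> 1"
    proof (rule ccontr)
      assume "\<not> length ss \<ge> 1"
      then have "length ss = 0" by linarith
      then have "ss = []" "ts = []" using h by auto
      then have "neq_alts A ss ts = []" by (simp add: neq_alts_def)
      then show False using alt[OF ad] A by simp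
    qed
    obtain B where B: "B \<in> set (neq_alts A ss ts)" "\<not> refutable nf B" using alt[OF ad] A by blast
    then obtain i where i: "i < length ss" "B = A \<union> {Neqf (the (tyof (ss ! i))) (ss ! i) (ts ! i)}"
      by (auto simp: neq_alts_def)
    obtain k where k: "a = Base k" using h is_sort_def by blast
    have g: "tyof (apps (Nm x) ss) = Some (Base k)" "nf (apps (Nm x) ss) = apps (Nm x) ss"
       "tyof (apps (Nm x) ts) = Some (Base k)" "nf (apps (Nm x) ts) = apps (Nm x) ts"
      using gA[of "Neqf a (apps (Nm x) ss) (apps (Nm x) ts)"] h good_Neqf[OF nf] k by simp_all
    have "good nf (Neqf (the (tyof (ss ! i))) (ss ! i) (ts ! i))"
      using args_facts[OF nf _ g i(1)] h by auto
    then show "length ss \<ge> 1 \<and> (\<exists>i<length ss. A \<union> {Neqf (the (tyof (ss ! i))) (ss ! i) (ts ! i)} \<in> G)"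
      using l i B inG[of "{Neqf (the (tyof (ss ! i))) (ss ! i) (ts ! i)}"] by auto
  qed
  show "(\<forall>a s t u v. is_sort a \<and> Eqf a s t \<in> A \<and> Neqf a u v \<in> A \<longrightarrow>
        A \<union> {Neqf a s u, Neqf a t u} \<in> G \<or> A \<union> {Neqf a s v, Neqf a t v} \<in> G)"
  proof (intro allI impI)
    fix a s t u v assume h: "is_sort a \<and> Eqf a s t \<in> A \<and> Neqf a u v \<in> A"
    have "admitted nf A [A \<union> {Neqf a s u, Neqf a t u}, A \<union> {Neqf a s v, Neqf a t v}]"
      by (rule admCon) (unfold r_Con_def, use h in blast)
    then have r: "\<not> refutable nf (A \<union> {Neqf a s u, Neqf a t u}) \<or> \<not> refutable nf (A \<union> {Neqf a s v, Neqf a t v})"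
      by (auto dest!: alt[OF _ A(3)])
    have "tyof s = Some a" "tyof t = Some a" "nf s = s" "nf t = t" using gA[of "Eqf a s t"] h good_Eqf[OF nf] by simp_all
    moreover have "tyof u = Some a" "tyof v = Some a" "nf u = u" "nf v = v" using gA[of "Neqf a u v"] h good_Neqf[OF nf] by simp_all
    ultimately have "good nf (Neqf a s u)" "good nf (Neqf a t u)" "good nf (Neqf a s v)" "good nf (Neqf a t v)"
      using good_Neqf[OF nf] by auto
    note gs = this
    have c1: "\<not> refutable nf (A \<union> {Neqf a s u, Neqf a t u}) \<Longrightarrow> A \<union> {Neqf a s u, Neqf a t u} \<in> G"
      by (rule inG) (use gs in simp_all)
    have c2: "\<not> refutable nf (A \<union> {Neqf a s v, Neqf a t v}) \<Longrightarrow> A \<union> {Neqf a s v, Neqf a t v} \<in> G"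
      by (rule inG) (use gs in simp_all)
    show "A \<union> {Neqf a s u, Neqf a t u} \<in> G \<or> A \<union> {Neqf a s v, Neqf a t v} \<in> G"
      using r c1 c2 by blast
  qed
qed

theorem lemma9p1:
  assumes "norm_op nf"
  shows "acc nf {A. finite A \<and> branch nf A \<and> \<not> refutable nf A}"
  unfolding acc_def
  apply (rule ballI)
  apply (erule CollectE)
  apply (elim conjE)
  apply (intro conjI)
   apply assumption
  apply (rule lemma9p1_core[OF assms], assumption+)+
  done

end
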